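(* Let $\nu\in\mathcal P_{2,0}(\mathbb R^d)$ and let $\mathcal D\subset\mathcal P_2(\mathbb R^d)$ be a nonempty, translation invariant cone. Define $$P_1=\sup\Big\{\int\langle x,y\rangle\,d\pi(x,y):\ \mu\in\mathcal D\cap\mathcal P_{2,0}(\mathbb R^d),\ \pi\in\Pi(\mu,\nu),\ \operatorname{Var}(\mu)\le1\Big\}.$$ Suppose $P_1>0$. Then: (a) if $(\hat\mu,\hat\pi)$ attains $P_1$, then $\operatorname{Var}(\hat\mu)=1$ and the dilation $(P_1)_\#\hat\mu$ maximizes $\operatorname{Var}$ over $\mathcal D\cap\mathcal M^K_\nu$; (b) conversely, if $\check\mu\ne\delta_0$ maximizes $\operatorname{Var}$ over $\mathcal D\cap\mathcal M^K_\nu$ and $\check\pi\in\operatorname{argmax}_{\pi\in\Pi(\check\mu,\nu)}\int\langle x,y\rangle d\pi$, then with $\check\lambda=\operatorname{Var}(\check\mu)^{-1/2}$ the pair $(\check\lambda_\#\check\mu,(\check\lambda\times\mathrm{id})_\#\check\pi)$ attains $P_1$. Moreover, $P_1=0$ if and only if the maximal value of $\operatorname{Var}$ over $\mathcal D\cap\mathcal M^K_\nu$ is $0$, in which case $\delta_0$ is a maximizer.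
   Context: $\mathcal P_2(\mathbb R^d)$: Borel probability measures with finite second moment; $\mathcal P_{2,0}$: those with zero mean. $\Pi(\mu,\nu)$: couplings. $\operatorname{Var}(\mu)=\int|x-\int z\,d\mu|^2d\mu$. Kantorovich dominance: $\mu\preceq_K\nu$ iff there is $\pi\in\Pi(\mu,\nu)$ with $\int\langle x-b_\nu,y-x\rangle\,d\pi=0$, $b_\nu=\int y\,d\nu$; $\mathcal M^K_\nu=\{\mu\in\mathcal P_2(\mathbb R^d):\mu\preceq_K\nu\}$. For $\lambda\in\mathbb R$, $\lambda_\#\mu$ is the law of $\lambda X$, $X\sim\mu$, and $(\lambda\times\mathrm{id})(x,y)=(\lambda x,y)$. $\mathcal D$ is a cone if $\lambda_\#\mu\in\mathcal D$ for all $\mu\in\mathcal D,\lambda\ge0$; translation invariant if $(T_k)_\#\mu\in\mathcal D$ for all $\mu\in\mathcal D$, $k\in\mathbb R^d$, $T_k(x)=x+k$. *)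

theory Defs
  imports "HOL-Probability.Probability"
begin

definition P2 :: "'a::euclidean_space measure set" where
  "P2 = {\<mu>. prob_space \<mu> \<and> sets \<mu> = sets borel \<and> integrable \<mu> (\<lambda>x. (norm x)\<^sup>2)}"

definition mean :: "'a::euclidean_space measure \<Rightarrow> 'a" where
  "mean \<mu> = integral\<^sup>L \<mu> (\<lambda>x. x)"

definition P20 :: "'a::euclidean_space measure set" where
  "P20 = {\<mu> \<in> P2. mean \<mu> = 0}"

definition Var :: "'a::euclidean_space measure \<Rightarrow> real" where
  "Var \<mu> = integral\<^sup>L \<mu> (\<lambda>x. (norm (x - mean \<mu>))\<^sup>2)"

definition couplings :: "'a::euclidean_space measure \<Rightarrow> 'a measure \<Rightarrow> ('a \<times> 'a) measure set" where
  "couplings \<mu> \<nu> = {\<pi>. prob_space \<pi> \<and> sets \<pi> = sets borel \<and>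
      distr \<pi> borel fst = \<mu> \<and> distr \<pi> borel snd = \<nu>}"

definition corr :: "('a::euclidean_space \<times> 'a) measure \<Rightarrow> real" where
  "corr \<pi> = integral\<^sup>L \<pi> (\<lambda>(x, y). inner x y)"

definition kdom :: "'a::euclidean_space measure \<Rightarrow> 'a measure \<Rightarrow> bool" where
  "kdom \<mu> \<nu> \<longleftrightarrow> (\<exists>\<pi> \<in> couplings \<mu> \<nu>.
      integral\<^sup>L \<pi> (\<lambda>(x, y). inner (x - mean \<nu>) (y - x)) = 0)"

definition MK :: "'a::euclidean_space measure \<Rightarrow> 'a measure set" where
  "MK \<nu> = {\<mu> \<in> P2. kdom \<mu> \<nu>}"

definition dil :: "real \<Rightarrow> 'a::euclidean_space measure \<Rightarrow> 'a measure" where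
  "dil l \<mu> = distr \<mu> borel (\<lambda>x. l *\<^sub>R x)"

definition dil1 :: "real \<Rightarrow> ('a::euclidean_space \<times> 'a) measure \<Rightarrow> ('a \<times> 'a) measure" where
  "dil1 l \<pi> = distr \<pi> borel (\<lambda>(x, y). (l *\<^sub>R x, y))"

definition is_cone :: "'a::euclidean_space measure set \<Rightarrow> bool" where
  "is_cone D \<longleftrightarrow> (\<forall>\<mu> \<in> D. \<forall>l::real. l \<ge> 0 \<longrightarrow> dil l \<mu> \<in> D)"

definition transl_inv :: "'a::euclidean_space measure set \<Rightarrow> bool" where
  "transl_inv D \<longleftrightarrow> (\<forall>\<mu> \<in> D. \<forall>k. distr \<mu> borel (\<lambda>x. x + k) \<in> D)"

text \<open>The value P_1 (a real supremum; the set is nonempty and bounded above under the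
standing assumptions).\<close>
definition P1 :: "'a::euclidean_space measure set \<Rightarrow> 'a measure \<Rightarrow> real" where
  "P1 D \<nu> = Sup {corr \<pi> | \<mu> \<pi>. \<mu> \<in> D \<inter> P20 \<and> \<pi> \<in> couplings \<mu> \<nu> \<and> Var \<mu> \<le> 1}"

definition attains_P1 :: "'a::euclidean_space measure set \<Rightarrow> 'a measure \<Rightarrow> 'a measure \<Rightarrow> ('a \<times> 'a) measure \<Rightarrow> bool" where
  "attains_P1 D \<nu> \<mu> \<pi> \<longleftrightarrow> \<mu> \<in> D \<inter> P20 \<and> \<pi> \<in> couplings \<mu> \<nu> \<and> Var \<mu> \<le> 1 \<and> corr \<pi> = P1 D \<nu>"

definition maximizes_Var :: "'a::euclidean_space measure set \<Rightarrow> 'a measure \<Rightarrow> bool" where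
  "maximizes_Var S \<mu> \<longleftrightarrow> \<mu> \<in> S \<and> (\<forall>\<mu>' \<in> S. Var \<mu>' \<le> Var \<mu>)"

end

theory Submission
  imports Defs
begin



lemma P2D:
  assumes "\<mu> \<in> P2"
  shows "prob_space \<mu>" "sets \<mu> = sets borel" "integrable \<mu> (\<lambda>x. (norm x)\<^sup>2)"
  using assms by (auto simp: P2_def)

lemma meas_borel:
  assumes "sets M = sets borel" "continuous_on UNIV f"
  shows "f \<in> borel_measurable M"
  using borel_measurable_continuous_onI[OF assms(2)] measurable_cong_sets[OF assms(1) refl] by blast

lemma meas_borel2:
  assumes "sets M = sets borel" "continuous_on UNIV f"
  shows "f \<in> measurable M borel"
  using meas_borel[OF assms] .

lemma norm_le_sq: "norm (x::'a::real_normed_vector) \<le> 1 + (norm x)\<^sup>2"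
proof -
  have h: "0 \<le> (norm x - 1)\<^sup>2" by simp
  then have "norm x * 2 \<le> 1 + norm x * norm x" unfolding power2_eq_square by (simp add: algebra_simps)
  then show ?thesis using norm_ge_zero[of x] unfolding power2_eq_square by linarith
qed

lemma P2_int_id:
  fixes \<mu> :: "'a::euclidean_space measure"
  assumes "\<mu> \<in> P2" shows "integrable \<mu> (\<lambda>x. x)"
proof -
  interpret prob_space \<mu> using P2D[OF assms] by simp
  have "integrable \<mu> (\<lambda>x. 1 + (norm x)\<^sup>2)" using P2D[OF assms] by simp
  then show ?thesis
  proof (rule Bochner_Integration.integrable_bound[where f="\<lambda>x. 1 + (norm x)\<^sup>2" and g="\<lambda>x. x"])
    show "(\<lambda>x. x) \<in> borel_measurable \<mu>" by (rule meas_borel[OF P2D(2)[OF assms]]) (intro continuous_intros)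
    show "AE x in \<mu>. norm x \<le> norm (1 + (norm x)\<^sup>2)"
      by (rule AE_I2) (use norm_le_sq in auto)
  qed
qed

lemma sq_expand: "(norm (x + k))\<^sup>2 = (norm x)\<^sup>2 + 2 * (x \<bullet> k) + (norm k)\<^sup>2"
  by (simp add: power2_norm_eq_inner inner_add inner_commute algebra_simps)

lemma sq_expand2: "(norm (x - k))\<^sup>2 = (norm x)\<^sup>2 - 2 * (x \<bullet> k) + (norm k)\<^sup>2"
  by (simp add: power2_norm_eq_inner inner_diff inner_commute algebra_simps)

lemma P2_int_aff:
  fixes \<mu> :: "'a::euclidean_space measure"
  assumes "\<mu> \<in> P2"
  shows "integrable \<mu> (\<lambda>x. (norm (t *\<^sub>R (x + k)))\<^sup>2)"
    and "integral\<^sup>L \<mu> (\<lambda>x. (norm (t *\<^sub>R (x + k)))\<^sup>2) = t\<^sup>2 * (integral\<^sup>L \<mu> (\<lambda>x. (norm x)\<^sup>2) + 2 * (mean \<mu> \<bullet> k) + (norm k)\<^sup>2)"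
proof -
  interpret prob_space \<mu> using P2D[OF assms] by simp
  have e: "(norm (t *\<^sub>R (x + k)))\<^sup>2 = t\<^sup>2 * ((norm x)\<^sup>2 + 2 * (x \<bullet> k) + (norm k)\<^sup>2)" for x
    by (simp add: power_mult_distrib sq_expand)
  have i1: "integrable \<mu> (\<lambda>x. (norm x)\<^sup>2)" using P2D[OF assms] by simp
  have i2: "integrable \<mu> (\<lambda>x. x \<bullet> k)" using P2_int_id[OF assms] by simp
  have i3: "integrable \<mu> (\<lambda>x. (norm x)\<^sup>2 + 2 * (x \<bullet> k) + (norm k)\<^sup>2)"
    using i1 i2 by simp
  show "integrable \<mu> (\<lambda>x. (norm (t *\<^sub>R (x + k)))\<^sup>2)" unfolding e using i3 by simp
  have "integral\<^sup>L \<mu> (\<lambda>x. (norm (t *\<^sub>R (x + k)))\<^sup>2) = t\<^sup>2 * integral\<^sup>L \<mu> (\<lambda>x. (norm x)\<^sup>2 + 2 * (x \<bullet> k) + (norm k)\<^sup>2)"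
    unfolding e by simp
  also have "integral\<^sup>L \<mu> (\<lambda>x. (norm x)\<^sup>2 + 2 * (x \<bullet> k) + (norm k)\<^sup>2) = integral\<^sup>L \<mu> (\<lambda>x. (norm x)\<^sup>2) + 2 * (mean \<mu> \<bullet> k) + (norm k)\<^sup>2"
    using i1 i2 P2_int_id[OF assms] by (simp add: mean_def prob_space)
  finally show "integral\<^sup>L \<mu> (\<lambda>x. (norm (t *\<^sub>R (x + k)))\<^sup>2) = t\<^sup>2 * (integral\<^sup>L \<mu> (\<lambda>x. (norm x)\<^sup>2) + 2 * (mean \<mu> \<bullet> k) + (norm k)\<^sup>2)" .
qed

lemma Var_alt:
  fixes \<mu> :: "'a::euclidean_space measure"
  assumes "\<mu> \<in> P2"
  shows "Var \<mu> = integral\<^sup>L \<mu> (\<lambda>x. (norm x)\<^sup>2) - (norm (mean \<mu>))\<^sup>2"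
proof -
  have "Var \<mu> = integral\<^sup>L \<mu> (\<lambda>x. (norm (1 *\<^sub>R (x + (- mean \<mu>))))\<^sup>2)"
    unfolding Var_def by simp
  also have "\<dots> = integral\<^sup>L \<mu> (\<lambda>x. (norm x)\<^sup>2) - (norm (mean \<mu>))\<^sup>2"
    unfolding P2_int_aff(2)[OF assms] by (simp add: power2_norm_eq_inner)
  finally show ?thesis .
qed

lemma Var_nonneg: "0 \<le> Var \<mu>"
  unfolding Var_def by (rule integral_nonneg_AE) simp

lemma push_P2:
  fixes \<mu> :: "'a::euclidean_space measure"
  assumes "\<mu> \<in> P2"
  shows "distr \<mu> borel (\<lambda>x. t *\<^sub>R (x + k)) \<in> P2"
    and "mean (distr \<mu> borel (\<lambda>x. t *\<^sub>R (x + k))) = t *\<^sub>R (mean \<mu> + k)"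
    and "Var (distr \<mu> borel (\<lambda>x. t *\<^sub>R (x + k))) = t\<^sup>2 * Var \<mu>"
    and "integral\<^sup>L (distr \<mu> borel (\<lambda>x. t *\<^sub>R (x + k))) (\<lambda>x. (norm x)\<^sup>2) = t\<^sup>2 * (integral\<^sup>L \<mu> (\<lambda>x. (norm x)\<^sup>2) + 2 * (mean \<mu> \<bullet> k) + (norm k)\<^sup>2)"
proof -
  interpret prob_space \<mu> using P2D[OF assms] by simp
  have m: "(\<lambda>x. t *\<^sub>R (x + k)) \<in> measurable \<mu> borel"
    by (rule meas_borel2[OF P2D(2)[OF assms]]) (intro continuous_intros)
  have mn: "(\<lambda>x::'a. (norm x)\<^sup>2) \<in> borel_measurable borel" by simp
  have mi: "(\<lambda>x::'a. x) \<in> borel_measurable borel" by simp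
  show P: "distr \<mu> borel (\<lambda>x. t *\<^sub>R (x + k)) \<in> P2"
    unfolding P2_def using prob_space_distr[OF m] P2_int_aff(1)[OF assms]
    by (simp add: integrable_distr_eq[OF m mn])
  show mm: "mean (distr \<mu> borel (\<lambda>x. t *\<^sub>R (x + k))) = t *\<^sub>R (mean \<mu> + k)"
    unfolding mean_def integral_distr[OF m mi] using P2_int_id[OF assms]
    by (simp add: prob_space)
  show "integral\<^sup>L (distr \<mu> borel (\<lambda>x. t *\<^sub>R (x + k))) (\<lambda>x. (norm x)\<^sup>2) = t\<^sup>2 * (integral\<^sup>L \<mu> (\<lambda>x. (norm x)\<^sup>2) + 2 * (mean \<mu> \<bullet> k) + (norm k)\<^sup>2)"
    unfolding integral_distr[OF m mn] by (rule P2_int_aff(2)[OF assms])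
  have mv: "(\<lambda>x::'a. (norm (x - t *\<^sub>R (mean \<mu> + k)))\<^sup>2) \<in> borel_measurable borel" by simp
  have e: "(norm (t *\<^sub>R (x + k) - t *\<^sub>R (mean \<mu> + k)))\<^sup>2 = t\<^sup>2 * (norm (x - mean \<mu>))\<^sup>2" for x
  proof -
    have "t *\<^sub>R (x + k) - t *\<^sub>R (mean \<mu> + k) = t *\<^sub>R (x - mean \<mu>)" by (simp add: algebra_simps)
    then show ?thesis by (simp add: power_mult_distrib)
  qed
  show "Var (distr \<mu> borel (\<lambda>x. t *\<^sub>R (x + k))) = t\<^sup>2 * Var \<mu>"
    unfolding Var_def mm integral_distr[OF m mv] e by simp
qed




lemma cplD:
  assumes "\<pi> \<in> couplings \<mu> \<nu>"
  shows "prob_space \<pi>" "sets \<pi> = sets borel" "distr \<pi> borel fst = \<mu>" "distr \<pi> borel snd = \<nu>"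
  using assms by (auto simp: couplings_def)

lemma fst_meas: "sets \<pi> = sets (borel :: ('a::euclidean_space \<times> 'a) measure) \<Longrightarrow> fst \<in> measurable \<pi> (borel :: 'a measure)"
  by (rule meas_borel2) (auto intro: continuous_intros)

lemma snd_meas: "sets \<pi> = sets (borel :: ('a::euclidean_space \<times> 'a) measure) \<Longrightarrow> snd \<in> measurable \<pi> (borel :: 'a measure)"
  by (rule meas_borel2) (auto intro: continuous_intros)

lemma cpl_fst:
  fixes f :: "'a::euclidean_space \<Rightarrow> real"
  assumes "\<pi> \<in> couplings \<mu> \<nu>" "f \<in> borel_measurable borel"
  shows "integrable \<pi> (\<lambda>p. f (fst p)) \<longleftrightarrow> integrable \<mu> f"
    "integral\<^sup>L \<pi> (\<lambda>p. f (fst p)) = integral\<^sup>L \<mu> f"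
  using integrable_distr_eq[OF fst_meas[OF cplD(2)[OF assms(1)]] assms(2)]
    integral_distr[OF fst_meas[OF cplD(2)[OF assms(1)]] assms(2)] cplD(3)[OF assms(1)] by auto

lemma cpl_snd:
  fixes f :: "'a::euclidean_space \<Rightarrow> real"
  assumes "\<pi> \<in> couplings \<mu> \<nu>" "f \<in> borel_measurable borel"
  shows "integrable \<pi> (\<lambda>p. f (snd p)) \<longleftrightarrow> integrable \<nu> f"
    "integral\<^sup>L \<pi> (\<lambda>p. f (snd p)) = integral\<^sup>L \<nu> f"
  using integrable_distr_eq[OF snd_meas[OF cplD(2)[OF assms(1)]] assms(2)]
    integral_distr[OF snd_meas[OF cplD(2)[OF assms(1)]] assms(2)] cplD(4)[OF assms(1)] by auto

lemma inner_le_sq: "norm (x \<bullet> y) \<le> norm ((norm x)\<^sup>2 + (norm y)\<^sup>2)"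
proof -
  have "\<bar>x \<bullet> y\<bar> \<le> norm x * norm y" by (rule Cauchy_Schwarz_ineq2)
  moreover have "0 \<le> (norm x - norm y)\<^sup>2" by simp
  then have "2 * (norm x * norm y) \<le> (norm x)\<^sup>2 + (norm y)\<^sup>2" unfolding power2_eq_square by (simp add: algebra_simps)
  moreover have "0 \<le> norm x * norm y" by simp
  ultimately show ?thesis by simp
qed

lemma inner_le_sq': "x \<bullet> y \<le> ((norm x)\<^sup>2 + (norm y)\<^sup>2) / 2"
proof -
  have "x \<bullet> y \<le> norm x * norm y" by (rule norm_cauchy_schwarz)
  moreover have "0 \<le> (norm x - norm y)\<^sup>2" by simp
  then have "2 * (norm x * norm y) \<le> (norm x)\<^sup>2 + (norm y)\<^sup>2" unfolding power2_eq_square by (simp add: algebra_simps)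
  ultimately show ?thesis by simp
qed

lemma cpl_ints:
  fixes \<mu> \<nu> :: "'a::euclidean_space measure"
  assumes "\<pi> \<in> couplings \<mu> \<nu>" "\<mu> \<in> P2" "\<nu> \<in> P2"
  shows "integrable \<pi> (\<lambda>p. (norm (fst p))\<^sup>2)" "integrable \<pi> (\<lambda>p. (norm (snd p))\<^sup>2)"
    "integrable \<pi> (\<lambda>p. fst p \<bullet> snd p)"
    "integrable \<pi> (\<lambda>p. k \<bullet> snd p)" "integral\<^sup>L \<pi> (\<lambda>p. k \<bullet> snd p) = k \<bullet> mean \<nu>"
proof -
  have mn: "(\<lambda>x::'a. (norm x)\<^sup>2) \<in> borel_measurable borel" by simp
  have mk: "(\<lambda>x::'a. k \<bullet> x) \<in> borel_measurable borel" by simp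
  show i1: "integrable \<pi> (\<lambda>p. (norm (fst p))\<^sup>2)" using cpl_fst(1)[OF assms(1) mn] P2D(3)[OF assms(2)] by simp
  show i2: "integrable \<pi> (\<lambda>p. (norm (snd p))\<^sup>2)" using cpl_snd(1)[OF assms(1) mn] P2D(3)[OF assms(3)] by simp
  show "integrable \<pi> (\<lambda>p. fst p \<bullet> snd p)"
  proof (rule Bochner_Integration.integrable_bound[where f="\<lambda>p. (norm (fst p))\<^sup>2 + (norm (snd p))\<^sup>2"])
    show "integrable \<pi> (\<lambda>p. (norm (fst p))\<^sup>2 + (norm (snd p))\<^sup>2)" using i1 i2 by simp
    show "(\<lambda>p. fst p \<bullet> snd p) \<in> borel_measurable \<pi>"
      by (rule meas_borel[OF cplD(2)[OF assms(1)]]) (intro continuous_intros)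
    show "AE x in \<pi>. norm (fst x \<bullet> snd x) \<le> norm ((norm (fst x))\<^sup>2 + (norm (snd x))\<^sup>2)"
      by (rule AE_I2) (rule inner_le_sq)
  qed
  have ik: "integrable \<nu> (\<lambda>x. k \<bullet> x)" using P2_int_id[OF assms(3)] by simp
  show "integrable \<pi> (\<lambda>p. k \<bullet> snd p)" using cpl_snd(1)[OF assms(1) mk] ik by simp
  show "integral\<^sup>L \<pi> (\<lambda>p. k \<bullet> snd p) = k \<bullet> mean \<nu>"
    using cpl_snd(2)[OF assms(1) mk] P2_int_id[OF assms(3)] by (simp add: mean_def)
qed

lemma corr_alt: "corr \<pi> = integral\<^sup>L \<pi> (\<lambda>p. fst p \<bullet> snd p)"
  unfolding corr_def by (simp add: case_prod_unfold)

lemma kdom_int: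
  fixes \<mu> \<nu> :: "'a::euclidean_space measure"
  assumes "\<pi> \<in> couplings \<mu> \<nu>" "\<mu> \<in> P2" "\<nu> \<in> P2" "mean \<nu> = 0"
  shows "integral\<^sup>L \<pi> (\<lambda>(x, y). inner (x - mean \<nu>) (y - x)) = corr \<pi> - integral\<^sup>L \<mu> (\<lambda>x. (norm x)\<^sup>2)"
proof -
  have mn: "(\<lambda>x::'a. (norm x)\<^sup>2) \<in> borel_measurable borel" by simp
  have e: "(\<lambda>(x, y). inner (x - mean \<nu>) (y - x)) = (\<lambda>p. fst p \<bullet> snd p - (norm (fst p))\<^sup>2)"
    using assms(4) by (auto simp: inner_diff_right power2_norm_eq_inner)
  show ?thesis unfolding e corr_alt
    using cpl_ints[OF assms(1-3)] cpl_fst(2)[OF assms(1) mn] by simp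
qed

definition push :: "real \<Rightarrow> 'a::euclidean_space \<Rightarrow> ('a \<times> 'a) measure \<Rightarrow> ('a \<times> 'a) measure" where
  "push t k \<pi> = distr \<pi> borel (\<lambda>p. (t *\<^sub>R (fst p + k), snd p))"

lemma push_cpl:
  fixes \<mu> \<nu> :: "'a::euclidean_space measure"
  assumes "\<pi> \<in> couplings \<mu> \<nu>" "\<mu> \<in> P2" "\<nu> \<in> P2"
  shows "push t k \<pi> \<in> couplings (distr \<mu> borel (\<lambda>x. t *\<^sub>R (x + k))) \<nu>"
    "corr (push t k \<pi>) = t * (corr \<pi> + k \<bullet> mean \<nu>)"
proof -
  note c = cplD[OF assms(1)]
  interpret prob_space \<pi> using c by simp
  have g: "(\<lambda>p. (t *\<^sub>R (fst p + k), snd p)) \<in> measurable \<pi> (borel :: ('a \<times> 'a) measure)"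
    by (rule meas_borel2[OF c(2)]) (intro continuous_intros)
  have f: "(\<lambda>x. t *\<^sub>R (x + k)) \<in> measurable (borel :: 'a measure) borel"
    by (rule meas_borel2[OF refl]) (intro continuous_intros)
  have fstb: "fst \<in> measurable (borel :: ('a \<times> 'a) measure) (borel :: 'a measure)" by (rule fst_meas) simp
  have sndb: "snd \<in> measurable (borel :: ('a \<times> 'a) measure) (borel :: 'a measure)" by (rule snd_meas) simp
  have "distr (push t k \<pi>) borel fst = distr \<pi> borel (fst \<circ> (\<lambda>p. (t *\<^sub>R (fst p + k), snd p)))"
    unfolding push_def by (rule distr_distr[OF fstb g])
  also have "fst \<circ> (\<lambda>p. (t *\<^sub>R (fst p + k), snd p)) = (\<lambda>x. t *\<^sub>R (x + k)) \<circ> fst" by auto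
  also have "distr \<pi> borel ((\<lambda>x. t *\<^sub>R (x + k)) \<circ> fst) = distr (distr \<pi> borel fst) borel (\<lambda>x. t *\<^sub>R (x + k))"
    by (rule distr_distr[OF f fst_meas[OF c(2)], symmetric])
  finally have d1: "distr (push t k \<pi>) borel fst = distr \<mu> borel (\<lambda>x. t *\<^sub>R (x + k))" using c by simp
  have "distr (push t k \<pi>) borel snd = distr \<pi> borel (snd \<circ> (\<lambda>p. (t *\<^sub>R (fst p + k), snd p)))"
    unfolding push_def by (rule distr_distr[OF sndb g])
  also have "snd \<circ> (\<lambda>p. (t *\<^sub>R (fst p + k), snd p)) = snd" by auto
  finally have d2: "distr (push t k \<pi>) borel snd = \<nu>" using c by simp
  show "push t k \<pi> \<in> couplings (distr \<mu> borel (\<lambda>x. t *\<^sub>R (x + k))) \<nu>"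
    unfolding couplings_def using d1 d2 prob_space_distr[OF g] by (simp add: push_def)
  have mi: "(\<lambda>p::'a\<times>'a. fst p \<bullet> snd p) \<in> borel_measurable borel"
    by (rule meas_borel[OF refl]) (intro continuous_intros)
  have "corr (push t k \<pi>) = integral\<^sup>L \<pi> (\<lambda>p. t * (fst p \<bullet> snd p) + t * (k \<bullet> snd p))"
    unfolding corr_alt push_def integral_distr[OF g mi] by (simp add: inner_add_left algebra_simps)
  also have "\<dots> = t * (corr \<pi> + k \<bullet> mean \<nu>)"
    using cpl_ints(4,5)[OF assms, of k] cpl_ints(3)[OF assms] by (simp add: corr_alt algebra_simps)
  finally show "corr (push t k \<pi>) = t * (corr \<pi> + k \<bullet> mean \<nu>)" .
qed




definition Sset :: "'a::euclidean_space measure set \<Rightarrow> 'a measure \<Rightarrow> real set" where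
  "Sset D \<nu> = {corr \<pi> | \<mu> \<pi>. \<mu> \<in> D \<inter> P20 \<and> \<pi> \<in> couplings \<mu> \<nu> \<and> Var \<mu> \<le> 1}"

lemma P1_Sset: "P1 D \<nu> = Sup (Sset D \<nu>)" unfolding P1_def Sset_def ..

lemma SsetI: "\<mu> \<in> D \<Longrightarrow> \<mu> \<in> P20 \<Longrightarrow> \<pi> \<in> couplings \<mu> \<nu> \<Longrightarrow> Var \<mu> \<le> 1 \<Longrightarrow> corr \<pi> \<in> Sset D \<nu>"
  unfolding Sset_def by blast

lemma SsetE: "c \<in> Sset D \<nu> \<Longrightarrow> (\<And>\<mu> \<pi>. \<mu> \<in> D \<Longrightarrow> \<mu> \<in> P20 \<Longrightarrow> \<pi> \<in> couplings \<mu> \<nu> \<Longrightarrow> Var \<mu> \<le> 1 \<Longrightarrow> c = corr \<pi> \<Longrightarrow> P) \<Longrightarrow> P"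
  unfolding Sset_def by blast

lemma dil_alt: "dil t \<mu> = distr \<mu> borel (\<lambda>x. t *\<^sub>R (x + 0))" unfolding dil_def by simp

lemma dil_P2:
  fixes \<mu> :: "'a::euclidean_space measure"
  assumes "\<mu> \<in> P2"
  shows "dil t \<mu> \<in> P2" "mean (dil t \<mu>) = t *\<^sub>R mean \<mu>" "Var (dil t \<mu>) = t\<^sup>2 * Var \<mu>"
    "integral\<^sup>L (dil t \<mu>) (\<lambda>x. (norm x)\<^sup>2) = t\<^sup>2 * integral\<^sup>L \<mu> (\<lambda>x. (norm x)\<^sup>2)"
  using push_P2[OF assms, of t 0] unfolding dil_alt by simp_all

lemma dil1_push: "dil1 t \<pi> = push t 0 \<pi>"
  unfolding dil1_def push_def by (simp add: case_prod_unfold)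

lemma M2_P20: "\<mu> \<in> P20 \<Longrightarrow> integral\<^sup>L \<mu> (\<lambda>x. (norm x)\<^sup>2) = Var \<mu>"
  using Var_alt[of \<mu>] by (simp add: P20_def)

locale setting =
  fixes \<nu> :: "'a::euclidean_space measure" and D :: "'a measure set"
  assumes nu: "\<nu> \<in> P20" and DP2: "D \<subseteq> P2" and Dne: "D \<noteq> {}" and cone: "is_cone D" and tr: "transl_inv D"
begin

lemma nuP2: "\<nu> \<in> P2" and nu0: "mean \<nu> = 0" using nu by (auto simp: P20_def)

lemma D_aff:
  assumes "\<mu> \<in> D" "t \<ge> 0"
  shows "distr \<mu> borel (\<lambda>x. t *\<^sub>R (x + k)) \<in> D"
proof -
  have P: "\<mu> \<in> P2" using assms DP2 by auto
  have m1: "(\<lambda>x. x + k) \<in> measurable \<mu> borel" by (rule meas_borel2[OF P2D(2)[OF P]]) (intro continuous_intros)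
  have m2: "(\<lambda>x. t *\<^sub>R x) \<in> measurable (borel :: 'a measure) borel" by (rule meas_borel2[OF refl]) (intro continuous_intros)
  have "distr \<mu> borel (\<lambda>x. x + k) \<in> D" using tr assms(1) unfolding transl_inv_def by blast
  then have "dil t (distr \<mu> borel (\<lambda>x. x + k)) \<in> D" using cone assms(2) unfolding is_cone_def by blast
  also have "dil t (distr \<mu> borel (\<lambda>x. x + k)) = distr \<mu> borel ((\<lambda>x. t *\<^sub>R x) \<circ> (\<lambda>x. x + k))"
    unfolding dil_def by (rule distr_distr[OF m2 m1])
  finally show ?thesis by (simp add: comp_def)
qed

lemma dil_D: "\<mu> \<in> D \<Longrightarrow> t \<ge> 0 \<Longrightarrow> dil t \<mu> \<in> D"
  using cone unfolding is_cone_def by blast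

definition kap :: "('a \<times> 'a) measure" where "kap = distr \<nu> borel (\<lambda>y. (0, y))"

lemma delta0:
  shows "return borel (0::'a) \<in> D" "return borel (0::'a) \<in> P20" "Var (return borel (0::'a)) = 0"
    "kap \<in> couplings (return borel (0::'a)) \<nu>" "corr kap = 0"
    "integral\<^sup>L (return borel (0::'a)) (\<lambda>x. (norm x)\<^sup>2) = 0"
proof -
  obtain \<mu>0 where m0: "\<mu>0 \<in> D" using Dne by auto
  have P: "\<mu>0 \<in> P2" using m0 DP2 by auto
  interpret prob_space \<mu>0 using P2D[OF P] by simp
  have "dil 0 \<mu>0 = distr \<mu>0 borel (\<lambda>x. 0::'a)" unfolding dil_def
    by (rule arg_cong[where f="distr \<mu>0 borel"]) auto
  also have "\<dots> = return borel (0::'a)" by (rule distr_const) simp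
  finally have e: "dil 0 \<mu>0 = return borel (0::'a)" .
  show "return borel (0::'a) \<in> D" using dil_D[OF m0, of 0] e by simp
  show "return borel (0::'a) \<in> P20" using dil_P2[OF P, of 0] e by (simp add: P20_def)
  show V: "Var (return borel (0::'a)) = 0" using dil_P2[OF P, of 0] e by simp
  show "integral\<^sup>L (return borel (0::'a)) (\<lambda>x. (norm x)\<^sup>2) = 0" using dil_P2[OF P, of 0] e by simp
  interpret N: prob_space \<nu> using P2D[OF nuP2] by simp
  have g: "(\<lambda>y. (0::'a, y)) \<in> measurable \<nu> borel" by (rule meas_borel2[OF P2D(2)[OF nuP2]]) (intro continuous_intros)
  have fstb: "fst \<in> measurable (borel :: ('a \<times> 'a) measure) (borel :: 'a measure)" by (rule fst_meas) simp
  have sndb: "snd \<in> measurable (borel :: ('a \<times> 'a) measure) (borel :: 'a measure)" by (rule snd_meas) simp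
  have d1: "distr kap borel fst = return borel (0::'a)"
    unfolding kap_def distr_distr[OF fstb g] by (simp add: comp_def)
  have di: "distr \<nu> borel (\<lambda>x. x) = \<nu>" by (rule distr_id2) (simp add: P2D(2)[OF nuP2])
  have d2: "distr kap borel snd = \<nu>"
    unfolding kap_def distr_distr[OF sndb g] by (simp add: comp_def di)
  show "kap \<in> couplings (return borel (0::'a)) \<nu>"
    unfolding couplings_def using d1 d2 N.prob_space_distr[OF g] by (simp add: kap_def)
  have mi: "(\<lambda>p::'a\<times>'a. fst p \<bullet> snd p) \<in> borel_measurable borel"
    by (rule meas_borel[OF refl]) (intro continuous_intros)
  show "corr kap = 0" unfolding corr_alt kap_def integral_distr[OF g mi] by simp
qed

lemma delta0_MK: "return borel (0::'a) \<in> MK \<nu>"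
proof -
  have P: "return borel (0::'a) \<in> P2" using delta0(2) unfolding P20_def by blast
  have "integral\<^sup>L kap (\<lambda>(x, y). inner (x - mean \<nu>) (y - x)) = 0"
    using kdom_int[OF delta0(4) P nuP2 nu0] delta0 by simp
  then show ?thesis unfolding MK_def kdom_def using P delta0(4) by blast
qed

lemma zero_S: "0 \<in> Sset D \<nu>"
proof -
  have "corr kap \<in> Sset D \<nu>" by (rule SsetI[OF delta0(1,2,4)]) (simp add: delta0(3))
  then show ?thesis by (simp add: delta0(5))
qed

lemma S_bdd: "bdd_above (Sset D \<nu>)"
proof (rule bdd_aboveI)
  fix c assume "c \<in> Sset D \<nu>"
  then obtain \<mu> \<pi> where h: "\<mu> \<in> D" "\<mu> \<in> P20" "\<pi> \<in> couplings \<mu> \<nu>" "Var \<mu> \<le> 1" "c = corr \<pi>"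
    by (rule SsetE)
  have P: "\<mu> \<in> P2" using h(2) by (simp add: P20_def)
  note ii = cpl_ints[OF h(3) P nuP2]
  have mn: "(\<lambda>x::'a. (norm x)\<^sup>2) \<in> borel_measurable borel" by simp
  have "c = integral\<^sup>L \<pi> (\<lambda>p. fst p \<bullet> snd p)" using h(5) corr_alt by simp
  also have "\<dots> \<le> integral\<^sup>L \<pi> (\<lambda>p. ((norm (fst p))\<^sup>2 + (norm (snd p))\<^sup>2) / 2)"
    apply (rule integral_mono)
    using ii apply simp
    using ii apply simp
    by (rule inner_le_sq')
  also have "\<dots> = (integral\<^sup>L \<pi> (\<lambda>p. (norm (fst p))\<^sup>2) + integral\<^sup>L \<pi> (\<lambda>p. (norm (snd p))\<^sup>2)) / 2"
    using ii by simp
  also have "\<dots> = (Var \<mu> + integral\<^sup>L \<nu> (\<lambda>x. (norm x)\<^sup>2)) / 2"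
    using cpl_fst(2)[OF h(3) mn] cpl_snd(2)[OF h(3) mn] M2_P20[OF h(2)] by simp
  also have "\<dots> \<le> (1 + integral\<^sup>L \<nu> (\<lambda>x. (norm x)\<^sup>2)) / 2" using h(4) by simp
  finally show "c \<le> (1 + integral\<^sup>L \<nu> (\<lambda>x. (norm x)\<^sup>2)) / 2" .
qed

lemma le_P1: "c \<in> Sset D \<nu> \<Longrightarrow> c \<le> P1 D \<nu>"
  unfolding P1_Sset by (rule cSup_upper[OF _ S_bdd])

lemma P1_nonneg: "0 \<le> P1 D \<nu>" using le_P1[OF zero_S] .

end




context setting begin

lemma lemA:
  assumes "\<mu> \<in> D" "\<mu> \<in> MK \<nu>" "Var \<mu> > 0"
  obtains \<mu>1 \<pi>1 where "\<mu>1 \<in> D" "\<mu>1 \<in> P20" "\<pi>1 \<in> couplings \<mu>1 \<nu>" "Var \<mu>1 = 1"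
    "corr \<pi>1 = (Var \<mu> + (norm (mean \<mu>))\<^sup>2) / sqrt (Var \<mu>)"
proof -
  have P: "\<mu> \<in> P2" and kd: "kdom \<mu> \<nu>" using assms(2) by (auto simp: MK_def)
  obtain \<pi>0 where p0: "\<pi>0 \<in> couplings \<mu> \<nu>" "integral\<^sup>L \<pi>0 (\<lambda>(x, y). inner (x - mean \<nu>) (y - x)) = 0"
    using kd unfolding kdom_def by blast
  have c0: "corr \<pi>0 = Var \<mu> + (norm (mean \<mu>))\<^sup>2"
    using kdom_int[OF p0(1) P nuP2 nu0] p0(2) Var_alt[OF P] by simp
  define s where "s = 1 / sqrt (Var \<mu>)"
  have s0: "s > 0" using assms(3) by (simp add: s_def)
  have s2: "s\<^sup>2 * Var \<mu> = 1" using assms(3) by (simp add: s_def power_divide)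
  let ?\<mu>1 = "distr \<mu> borel (\<lambda>x. s *\<^sub>R (x + - mean \<mu>))"
  note pp = push_P2[OF P, of s "- mean \<mu>"]
  show ?thesis
  proof (rule that[of ?\<mu>1 "push s (- mean \<mu>) \<pi>0"])
    show "?\<mu>1 \<in> D" using D_aff[OF assms(1), of s "- mean \<mu>"] s0 by simp
    show "?\<mu>1 \<in> P20" using pp by (simp add: P20_def)
    show "push s (- mean \<mu>) \<pi>0 \<in> couplings ?\<mu>1 \<nu>" by (rule push_cpl(1)[OF p0(1) P nuP2])
    show "Var ?\<mu>1 = 1" using pp s2 by simp
    show "corr (push s (- mean \<mu>) \<pi>0) = (Var \<mu> + (norm (mean \<mu>))\<^sup>2) / sqrt (Var \<mu>)"
      using push_cpl(2)[OF p0(1) P nuP2, of s "- mean \<mu>"] c0 nu0 by (simp add: s_def)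
  qed
qed

lemma lemA2:
  assumes "\<mu> \<in> D" "\<mu> \<in> MK \<nu>"
  shows "Var \<mu> \<le> (P1 D \<nu>)\<^sup>2"
proof (cases "Var \<mu> > 0")
  case True
  obtain \<mu>1 \<pi>1 where h: "\<mu>1 \<in> D" "\<mu>1 \<in> P20" "\<pi>1 \<in> couplings \<mu>1 \<nu>" "Var \<mu>1 = 1"
    "corr \<pi>1 = (Var \<mu> + (norm (mean \<mu>))\<^sup>2) / sqrt (Var \<mu>)" using lemA[OF assms True] .
  have "corr \<pi>1 \<le> P1 D \<nu>" by (rule le_P1[OF SsetI[OF h(1-3)]]) (simp add: h(4))
  moreover have "sqrt (Var \<mu>) \<le> (Var \<mu> + (norm (mean \<mu>))\<^sup>2) / sqrt (Var \<mu>)"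
    using True by (simp add: field_simps)
  ultimately have "sqrt (Var \<mu>) \<le> P1 D \<nu>" using h(5) by simp
  then have "(sqrt (Var \<mu>))\<^sup>2 \<le> (P1 D \<nu>)\<^sup>2" by (rule power_mono) (simp add: Var_nonneg)
  then show ?thesis using True by simp
next
  case False
  then show ?thesis using Var_nonneg[of \<mu>] by simp
qed

lemma lemB:
  assumes "\<mu> \<in> D" "\<mu> \<in> P20" "\<pi> \<in> couplings \<mu> \<nu>" "Var \<mu> \<le> 1" "corr \<pi> > 0"
  shows "Var \<mu> > 0" "dil (corr \<pi> / Var \<mu>) \<mu> \<in> D" "dil (corr \<pi> / Var \<mu>) \<mu> \<in> MK \<nu>"
    "Var (dil (corr \<pi> / Var \<mu>) \<mu>) = (corr \<pi>)\<^sup>2 / Var \<mu>"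
proof -
  have P: "\<mu> \<in> P2" and m0: "mean \<mu> = 0" using assms(2) by (auto simp: P20_def)
  have dilpush: "dil t \<mu> = distr \<mu> borel (\<lambda>x. t *\<^sub>R (x + 0))" for t by (rule dil_alt)
  show V: "Var \<mu> > 0"
  proof (rule ccontr)
    assume "\<not> Var \<mu> > 0"
    then have V0: "Var \<mu> = 0" using Var_nonneg[of \<mu>] by simp
    have st: "t * corr \<pi> \<in> Sset D \<nu>" if "t > 0" for t
    proof -
      have "corr (push t 0 \<pi>) \<in> Sset D \<nu>"
      proof (rule SsetI)
        show "distr \<mu> borel (\<lambda>x. t *\<^sub>R (x + 0)) \<in> D" using D_aff[OF assms(1), of t 0] that by simp
        show "distr \<mu> borel (\<lambda>x. t *\<^sub>R (x + 0)) \<in> P20" using push_P2[OF P, of t 0] m0 by (simp add: P20_def)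
        show "push t 0 \<pi> \<in> couplings (distr \<mu> borel (\<lambda>x. t *\<^sub>R (x + 0))) \<nu>" by (rule push_cpl(1)[OF assms(3) P nuP2])
        show "Var (distr \<mu> borel (\<lambda>x. t *\<^sub>R (x + 0))) \<le> 1" using push_P2[OF P, of t 0] V0 by simp
      qed
      then show ?thesis using push_cpl(2)[OF assms(3) P nuP2, of t 0] by simp
    qed
    obtain B where B: "\<And>c. c \<in> Sset D \<nu> \<Longrightarrow> c \<le> B" using S_bdd unfolding bdd_above_def by blast
    have tp: "(\<bar>B\<bar> + 1) / corr \<pi> > 0" using assms(5) by (intro divide_pos_pos) simp_all
    have "((\<bar>B\<bar> + 1) / corr \<pi>) * corr \<pi> \<le> B" by (rule B[OF st[OF tp]])
    then show False using assms(5) by simp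
  qed
  define t where "t = corr \<pi> / Var \<mu>"
  have t0: "t > 0" using V assms(5) by (simp add: t_def)
  show "dil (corr \<pi> / Var \<mu>) \<mu> \<in> D" using dil_D[OF assms(1)] t0 by (simp add: t_def)
  note dp = dil_P2[OF P, of t]
  show "Var (dil (corr \<pi> / Var \<mu>) \<mu>) = (corr \<pi>)\<^sup>2 / Var \<mu>"
    using dp V by (simp add: t_def power_divide power2_eq_square)
  have cp: "push t 0 \<pi> \<in> couplings (dil t \<mu>) \<nu>" unfolding dilpush by (rule push_cpl(1)[OF assms(3) P nuP2])
  have "integral\<^sup>L (push t 0 \<pi>) (\<lambda>(x, y). inner (x - mean \<nu>) (y - x)) = corr (push t 0 \<pi>) - integral\<^sup>L (dil t \<mu>) (\<lambda>x. (norm x)\<^sup>2)"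
    by (rule kdom_int[OF cp dp(1) nuP2 nu0])
  also have "\<dots> = t * corr \<pi> - t\<^sup>2 * Var \<mu>"
    using push_cpl(2)[OF assms(3) P nuP2, of t 0] dp(4) M2_P20[OF assms(2)] by simp
  also have "\<dots> = 0" using V by (simp add: t_def power2_eq_square)
  finally have "kdom (dil t \<mu>) \<nu>" unfolding kdom_def using cp by blast
  then show "dil (corr \<pi> / Var \<mu>) \<mu> \<in> MK \<nu>" using dp(1) by (simp add: MK_def t_def)
qed

lemma pos_elem:
  assumes "P1 D \<nu> > 0"
  obtains \<mu> \<pi> where "\<mu> \<in> D" "\<mu> \<in> P20" "\<pi> \<in> couplings \<mu> \<nu>" "Var \<mu> \<le> 1" "corr \<pi> > 0"
proof -
  have "\<exists>c\<in>Sset D \<nu>. 0 < c" using assms less_cSup_iff[OF _ S_bdd, of 0] zero_S unfolding P1_Sset by blast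
  then obtain c where "c \<in> Sset D \<nu>" "c > 0" by blast
  then show ?thesis using that by (auto elim!: SsetE)
qed

lemma pos_var:
  assumes "P1 D \<nu> > 0"
  obtains \<mu> where "\<mu> \<in> D" "\<mu> \<in> MK \<nu>" "Var \<mu> > 0"
proof -
  obtain \<mu> \<pi> where h: "\<mu> \<in> D" "\<mu> \<in> P20" "\<pi> \<in> couplings \<mu> \<nu>" "Var \<mu> \<le> 1" "corr \<pi> > 0"
    using pos_elem[OF assms] .
  note b = lemB[OF h]
  show ?thesis by (rule that[OF b(2,3)]) (use b(1,4) h(5) in simp)
qed

end




context setting begin

lemma partA:
  assumes P: "P1 D \<nu> > 0" and att: "attains_P1 D \<nu> \<mu> \<pi>"
  shows "Var \<mu> = 1 \<and> maximizes_Var (D \<inter> MK \<nu>) (dil (P1 D \<nu>) \<mu>)"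
proof -
  have h: "\<mu> \<in> D" "\<mu> \<in> P20" "\<pi> \<in> couplings \<mu> \<nu>" "Var \<mu> \<le> 1" "corr \<pi> = P1 D \<nu>"
    using att unfolding attains_P1_def by auto
  have cp: "corr \<pi> > 0" using h(5) P by simp
  note b = lemB[OF h(1-4) cp]
  have "Var (dil (corr \<pi> / Var \<mu>) \<mu>) \<le> (P1 D \<nu>)\<^sup>2" by (rule lemA2[OF b(2,3)])
  then have "(P1 D \<nu>)\<^sup>2 / Var \<mu> \<le> (P1 D \<nu>)\<^sup>2 * 1" using b(4) h(5) by simp
  then have "1 \<le> Var \<mu>" using b(1) P by (simp add: divide_le_eq)
  then have V1: "Var \<mu> = 1" using h(4) by simp
  have eqd: "dil (corr \<pi> / Var \<mu>) \<mu> = dil (P1 D \<nu>) \<mu>" using V1 h(5) by simp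
  have vd: "Var (dil (P1 D \<nu>) \<mu>) = (P1 D \<nu>)\<^sup>2" using b(4) V1 h(5) eqd by simp
  have "maximizes_Var (D \<inter> MK \<nu>) (dil (P1 D \<nu>) \<mu>)"
    unfolding maximizes_Var_def
  proof (intro conjI ballI)
    show "dil (P1 D \<nu>) \<mu> \<in> D \<inter> MK \<nu>" using b(2,3) eqd by simp
    fix \<mu>' assume "\<mu>' \<in> D \<inter> MK \<nu>"
    then have "Var \<mu>' \<le> (P1 D \<nu>)\<^sup>2" using lemA2 by blast
    then show "Var \<mu>' \<le> Var (dil (P1 D \<nu>) \<mu>)" using vd by simp
  qed
  then show ?thesis using V1 by simp
qed

lemma partB:
  assumes P: "P1 D \<nu> > 0" and mx: "maximizes_Var (D \<inter> MK \<nu>) \<mu>"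
    and cp: "\<pi> \<in> couplings \<mu> \<nu>" and opt: "\<forall>\<pi>' \<in> couplings \<mu> \<nu>. corr \<pi>' \<le> corr \<pi>"
  shows "attains_P1 D \<nu> (dil (1 / sqrt (Var \<mu>)) \<mu>) (dil1 (1 / sqrt (Var \<mu>)) \<pi>)"
proof -
  have mD: "\<mu> \<in> D" and mK: "\<mu> \<in> MK \<nu>" and mxv: "\<And>\<mu>'. \<mu>' \<in> D \<Longrightarrow> \<mu>' \<in> MK \<nu> \<Longrightarrow> Var \<mu>' \<le> Var \<mu>"
    using mx unfolding maximizes_Var_def by auto
  have Pm: "\<mu> \<in> P2" and kd: "kdom \<mu> \<nu>" using mK by (auto simp: MK_def)
  obtain \<mu>2 where "\<mu>2 \<in> D" "\<mu>2 \<in> MK \<nu>" "Var \<mu>2 > 0" using pos_var[OF P] .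
  then have V: "Var \<mu> > 0" using mxv[of \<mu>2] by linarith
  obtain \<mu>1 \<pi>1 where h1: "\<mu>1 \<in> D" "\<mu>1 \<in> P20" "\<pi>1 \<in> couplings \<mu>1 \<nu>" "Var \<mu>1 = 1"
    "corr \<pi>1 = (Var \<mu> + (norm (mean \<mu>))\<^sup>2) / sqrt (Var \<mu>)" using lemA[OF mD mK V] .
  have c1: "corr \<pi>1 > 0" using h1(5) V by (simp add: add_pos_nonneg)
  note b1 = lemB[OF h1(1,2,3) _ c1]
  have "Var (dil (corr \<pi>1 / Var \<mu>1) \<mu>1) \<le> Var \<mu>" using b1(2,3) h1(4) by (intro mxv) simp_all
  then have "(corr \<pi>1)\<^sup>2 \<le> Var \<mu>" using b1(4) h1(4) by simp
  then have "(Var \<mu> + (norm (mean \<mu>))\<^sup>2)\<^sup>2 / Var \<mu> \<le> Var \<mu>" using h1(5) V by (simp add: power_divide)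
  then have "(Var \<mu> + (norm (mean \<mu>))\<^sup>2)\<^sup>2 \<le> Var \<mu> * Var \<mu>" using V by (simp add: divide_le_eq)
  then have "(Var \<mu> + (norm (mean \<mu>))\<^sup>2)\<^sup>2 \<le> (Var \<mu>)\<^sup>2" by (simp only: power2_eq_square)
  then have "Var \<mu> + (norm (mean \<mu>))\<^sup>2 \<le> Var \<mu>"
    by (rule power2_le_imp_le) (use V in simp)
  then have m0: "mean \<mu> = 0" by simp
  obtain \<pi>0 where p0: "\<pi>0 \<in> couplings \<mu> \<nu>" "integral\<^sup>L \<pi>0 (\<lambda>(x, y). inner (x - mean \<nu>) (y - x)) = 0"
    using kd unfolding kdom_def by blast
  have c0: "corr \<pi>0 = Var \<mu>"
    using kdom_int[OF p0(1) Pm nuP2 nu0] p0(2) Var_alt[OF Pm] m0 by simp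
  have cpi: "Var \<mu> \<le> corr \<pi>" using opt p0(1) c0 by force
  define l where "l = 1 / sqrt (Var \<mu>)"
  have l0: "l > 0" using V by (simp add: l_def)
  have lV: "l * Var \<mu> = sqrt (Var \<mu>)" using V by (simp add: l_def real_div_sqrt)
  note dp = dil_P2[OF Pm, of l]
  have dD: "dil l \<mu> \<in> D" using dil_D[OF mD] l0 by simp
  have d20: "dil l \<mu> \<in> P20" using dp m0 by (simp add: P20_def)
  have dV: "Var (dil l \<mu>) = 1" using dp V by (simp add: l_def power_divide)
  have dcp: "dil1 l \<pi> \<in> couplings (dil l \<mu>) \<nu>"
    unfolding dil1_push dil_alt by (rule push_cpl(1)[OF cp Pm nuP2])
  have dcorr: "corr (dil1 l \<pi>) = l * corr \<pi>"
    unfolding dil1_push using push_cpl(2)[OF cp Pm nuP2, of l 0] by simp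
  have inS: "corr (dil1 l \<pi>) \<in> Sset D \<nu>" by (rule SsetI[OF dD d20 dcp]) (simp add: dV)
  have ub: "c \<le> l * corr \<pi>" if cS: "c \<in> Sset D \<nu>" for c
  proof (cases "c > 0")
    case True
    obtain \<mu>' \<pi>' where h: "\<mu>' \<in> D" "\<mu>' \<in> P20" "\<pi>' \<in> couplings \<mu>' \<nu>" "Var \<mu>' \<le> 1" "c = corr \<pi>'"
      using cS by (rule SsetE)
    have cp': "corr \<pi>' > 0" using True h(5) by simp
    note b = lemB[OF h(1-4) cp']
    have "(corr \<pi>')\<^sup>2 / Var \<mu>' \<le> Var \<mu>" using mxv[OF b(2,3)] b(4) by simp
    moreover have "(corr \<pi>')\<^sup>2 \<le> (corr \<pi>')\<^sup>2 / Var \<mu>'" using b(1) h(4)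
      by (simp add: le_divide_eq mult_left_le)
    ultimately have "(corr \<pi>')\<^sup>2 \<le> (sqrt (Var \<mu>))\<^sup>2" using V by simp
    then have "corr \<pi>' \<le> sqrt (Var \<mu>)" by (rule power2_le_imp_le) (simp add: Var_nonneg)
    also have "\<dots> = l * Var \<mu>" using lV by simp
    also have "\<dots> \<le> l * corr \<pi>" using cpi l0 by simp
    finally show ?thesis using h(5) by simp
  next
    case False
    have "0 \<le> l * corr \<pi>" using cpi V l0 by simp
    then show ?thesis using False by simp
  qed
  have "P1 D \<nu> = corr (dil1 l \<pi>)"
  proof (rule antisym)
    show "corr (dil1 l \<pi>) \<le> P1 D \<nu>" by (rule le_P1[OF inS])
    show "P1 D \<nu> \<le> corr (dil1 l \<pi>)" unfolding P1_Sset dcorr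
      by (rule cSup_least) (use zero_S ub in auto)
  qed
  then show ?thesis unfolding attains_P1_def l_def[symmetric] using dD d20 dcp dV by simp
qed

lemma partC:
  shows "(P1 D \<nu> = 0 \<longleftrightarrow> (\<exists>\<mu>. maximizes_Var (D \<inter> MK \<nu>) \<mu> \<and> Var \<mu> = 0))"
    and "(P1 D \<nu> = 0 \<longrightarrow> maximizes_Var (D \<inter> MK \<nu>) (return borel 0))"
proof -
  have mz: "maximizes_Var (D \<inter> MK \<nu>) (return borel 0)" if "P1 D \<nu> = 0"
    unfolding maximizes_Var_def
  proof (intro conjI ballI)
    show "return borel 0 \<in> D \<inter> MK \<nu>" using delta0(1) delta0_MK by simp
    fix \<mu>' assume "\<mu>' \<in> D \<inter> MK \<nu>"
    then have "Var \<mu>' \<le> (P1 D \<nu>)\<^sup>2" using lemA2 by blast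
    then show "Var \<mu>' \<le> Var (return borel (0::'a))" using that delta0(3) by simp
  qed
  show "(P1 D \<nu> = 0 \<longrightarrow> maximizes_Var (D \<inter> MK \<nu>) (return borel 0))" using mz by blast
  show "(P1 D \<nu> = 0 \<longleftrightarrow> (\<exists>\<mu>. maximizes_Var (D \<inter> MK \<nu>) \<mu> \<and> Var \<mu> = 0))"
  proof
    assume "P1 D \<nu> = 0" then show "\<exists>\<mu>. maximizes_Var (D \<inter> MK \<nu>) \<mu> \<and> Var \<mu> = 0"
      using mz delta0(3) by blast
  next
    assume "\<exists>\<mu>. maximizes_Var (D \<inter> MK \<nu>) \<mu> \<and> Var \<mu> = 0"
    then obtain \<mu> where "maximizes_Var (D \<inter> MK \<nu>) \<mu>" "Var \<mu> = 0" by blast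
    then have all0: "\<And>\<mu>'. \<mu>' \<in> D \<Longrightarrow> \<mu>' \<in> MK \<nu> \<Longrightarrow> Var \<mu>' \<le> 0" unfolding maximizes_Var_def by force
    show "P1 D \<nu> = 0"
    proof (rule ccontr)
      assume "P1 D \<nu> \<noteq> 0"
      then have "P1 D \<nu> > 0" using P1_nonneg by simp
      then obtain \<mu>2 where "\<mu>2 \<in> D" "\<mu>2 \<in> MK \<nu>" "Var \<mu>2 > 0" by (rule pos_var)
      then show False using all0 by force
    qed
  qed
qed

end

theorem mainTheorem20:
  fixes \<nu> :: "'a::euclidean_space measure" and D :: "'a measure set"
  assumes "\<nu> \<in> P20" and "D \<subseteq> P2" and "D \<noteq> {}" and "is_cone D" and "transl_inv D"
  shows "(P1 D \<nu> > 0 \<longrightarrow>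
            (\<forall>\<mu> \<pi>. attains_P1 D \<nu> \<mu> \<pi> \<longrightarrow>
               Var \<mu> = 1 \<and> maximizes_Var (D \<inter> MK \<nu>) (dil (P1 D \<nu>) \<mu>))
          \<and> (\<forall>\<mu> \<pi>. maximizes_Var (D \<inter> MK \<nu>) \<mu> \<and> \<mu> \<noteq> return borel 0
               \<and> \<pi> \<in> couplings \<mu> \<nu> \<and> (\<forall>\<pi>' \<in> couplings \<mu> \<nu>. corr \<pi>' \<le> corr \<pi>) \<longrightarrow>
               attains_P1 D \<nu> (dil (1 / sqrt (Var \<mu>)) \<mu>) (dil1 (1 / sqrt (Var \<mu>)) \<pi>)))
       \<and> (P1 D \<nu> = 0 \<longleftrightarrow> (\<exists>\<mu>. maximizes_Var (D \<inter> MK \<nu>) \<mu> \<and> Var \<mu> = 0))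
       \<and> (P1 D \<nu> = 0 \<longrightarrow> maximizes_Var (D \<inter> MK \<nu>) (return borel 0))"
proof -
  interpret setting \<nu> D using assms by unfold_locales
  have a: "P1 D \<nu> > 0 \<longrightarrow>
            (\<forall>\<mu> \<pi>. attains_P1 D \<nu> \<mu> \<pi> \<longrightarrow>
               Var \<mu> = 1 \<and> maximizes_Var (D \<inter> MK \<nu>) (dil (P1 D \<nu>) \<mu>))
          \<and> (\<forall>\<mu> \<pi>. maximizes_Var (D \<inter> MK \<nu>) \<mu> \<and> \<mu> \<noteq> return borel 0
               \<and> \<pi> \<in> couplings \<mu> \<nu> \<and> (\<forall>\<pi>' \<in> couplings \<mu> \<nu>. corr \<pi>' \<le> corr \<pi>) \<longrightarrow>
               attains_P1 D \<nu> (dil (1 / sqrt (Var \<mu>)) \<mu>) (dil1 (1 / sqrt (Var \<mu>)) \<pi>))"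
  proof (rule impI)
    assume P: "P1 D \<nu> > 0"
    have A: "\<forall>\<mu> \<pi>. attains_P1 D \<nu> \<mu> \<pi> \<longrightarrow>
               Var \<mu> = 1 \<and> maximizes_Var (D \<inter> MK \<nu>) (dil (P1 D \<nu>) \<mu>)"
    proof (intro allI impI)
      fix \<mu> \<pi> assume "attains_P1 D \<nu> \<mu> \<pi>"
      then show "Var \<mu> = 1 \<and> maximizes_Var (D \<inter> MK \<nu>) (dil (P1 D \<nu>) \<mu>)" by (rule partA[OF P])
    qed
    have B: "\<forall>\<mu> \<pi>. maximizes_Var (D \<inter> MK \<nu>) \<mu> \<and> \<mu> \<noteq> return borel 0
               \<and> \<pi> \<in> couplings \<mu> \<nu> \<and> (\<forall>\<pi>' \<in> couplings \<mu> \<nu>. corr \<pi>' \<le> corr \<pi>) \<longrightarrow>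
               attains_P1 D \<nu> (dil (1 / sqrt (Var \<mu>)) \<mu>) (dil1 (1 / sqrt (Var \<mu>)) \<pi>)"
    proof (intro allI impI)
      fix \<mu> \<pi> assume h: "maximizes_Var (D \<inter> MK \<nu>) \<mu> \<and> \<mu> \<noteq> return borel 0
               \<and> \<pi> \<in> couplings \<mu> \<nu> \<and> (\<forall>\<pi>' \<in> couplings \<mu> \<nu>. corr \<pi>' \<le> corr \<pi>)"
      from h have h1: "maximizes_Var (D \<inter> MK \<nu>) \<mu>" and h2: "\<pi> \<in> couplings \<mu> \<nu>"
        and h3: "\<forall>\<pi>' \<in> couplings \<mu> \<nu>. corr \<pi>' \<le> corr \<pi>" by simp_all
      show "attains_P1 D \<nu> (dil (1 / sqrt (Var \<mu>)) \<mu>) (dil1 (1 / sqrt (Var \<mu>)) \<pi>)"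
        by (rule partB[OF P h1 h2 h3])
    qed
    show "(\<forall>\<mu> \<pi>. attains_P1 D \<nu> \<mu> \<pi> \<longrightarrow>
               Var \<mu> = 1 \<and> maximizes_Var (D \<inter> MK \<nu>) (dil (P1 D \<nu>) \<mu>))
          \<and> (\<forall>\<mu> \<pi>. maximizes_Var (D \<inter> MK \<nu>) \<mu> \<and> \<mu> \<noteq> return borel 0
               \<and> \<pi> \<in> couplings \<mu> \<nu> \<and> (\<forall>\<pi>' \<in> couplings \<mu> \<nu>. corr \<pi>' \<le> corr \<pi>) \<longrightarrow>
               attains_P1 D \<nu> (dil (1 / sqrt (Var \<mu>)) \<mu>) (dil1 (1 / sqrt (Var \<mu>)) \<pi>))"
      using A B by (rule conjI)
  qed
  show ?thesis by (intro conjI a partC(1) partC(2))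
qed


end
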